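(* Let $\mathscr{F}=(\Omega,\sqsubseteq,\mathcal{E},\mathcal{A})$ where $(\Omega,\sqsubseteq,\mathcal{E})$ is a quasi-principal possibility frame whose poset has a maximum element, and $\mathcal{A}:\Omega\to\wp(\Omega)$ satisfies awareness expressibility: for all $\omega,\nu$, if $\nu\in\mathcal{A}(\omega)$ then $\downarrow\nu\in\mathcal{E}$. Consider the conditions: (i) (awareness joinability) for all $\omega,\nu\in\Omega$ and $E,E'\in\mathcal{E}$, if $\nu\in\mathcal{A}(\omega)$ and $\max(E\cap\downarrow\nu)\cup\max(E'\cap\downarrow\nu)\subseteq\mathcal{A}(\omega)$, then $\max((E\sqcup E')\cap\downarrow\nu)\subseteq\mathcal{A}(\omega)$; (ii) for all $\omega,\nu\in\Omega$ with $\nu\in\mathcal{A}(\omega)$, all $n\ge1$ and all $\nu_1,\dots,\nu_n\in\mathcal{A}(\omega)\cap\downarrow\nu$, we have $\max((\downarrow\nu_1\sqcup\dots\sqcup\downarrow\nu_n)\cap\downarrow\nu)\subseteq\mathcal{A}(\omega)$. Then (i) implies (ii). Conversely, if $\max(E)$ is finite for each $E\in\mathcal{E}$, then (ii) implies (i).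
   Context: For a poset $(\Omega,\sqsubseteq)$, $\downarrow E=\{\omega\mid\omega\sqsubseteq\nu\text{ for some }\nu\in E\}$, $\downarrow\nu=\downarrow\{\nu\}$; $\rho(E)=\{\omega\mid\forall\omega'\sqsubseteq\omega\ \exists\omega''\sqsubseteq\omega'\colon\omega''\in\downarrow E\}$; $\mathcal{RO}(\Omega,\sqsubseteq)=\{E\mid\rho(E)=E\}$ is a Boolean algebra under $\subseteq$ with meet $\cap$, join $E\sqcup F=\rho(E\cup F)$ and complement $\neg E=\{\omega\mid\forall\omega'\sqsubseteq\omega,\ \omega'\notin E\}$. $\max(E)=\{\omega\in E\mid\text{no }\nu\in E\text{ with }\omega\sqsubseteq\nu,\ \nu\not\sqsubseteq\omega\}$. A possibility frame $(\Omega,\sqsubseteq,\mathcal{E})$: $(\Omega,\sqsubseteq)$ a poset and $\mathcal{E}$ a nonempty subset of $\mathcal{RO}(\Omega,\sqsubseteq)$ closed under binary $\cap$ and $\neg$; it is quasi-principal if for every $E\in\mathcal{E}$ and $\omega\in E$, $\omega\in\downarrow\max(E)$. *)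

theory Defs
  imports Main
begin

text \<open>A poset is represented by a type 'a (the set Omega = UNIV) together with a
 relation le (the order "sqsubseteq").\<close>

definition poset :: "('a \<Rightarrow> 'a \<Rightarrow> bool) \<Rightarrow> bool" where
  "poset le \<longleftrightarrow> (\<forall>x. le x x) \<and> (\<forall>x y z. le x y \<longrightarrow> le y z \<longrightarrow> le x z)
     \<and> (\<forall>x y. le x y \<longrightarrow> le y x \<longrightarrow> x = y)"

definition down :: "('a \<Rightarrow> 'a \<Rightarrow> bool) \<Rightarrow> 'a set \<Rightarrow> 'a set" where
  "down le E = {w. \<exists>v\<in>E. le w v}"

definition rho :: "('a \<Rightarrow> 'a \<Rightarrow> bool) \<Rightarrow> 'a set \<Rightarrow> 'a set" where
  "rho le E = {w. \<forall>w'. le w' w \<longrightarrow> (\<exists>w''. le w'' w' \<and> w'' \<in> down le E)}"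

definition RO :: "('a \<Rightarrow> 'a \<Rightarrow> bool) \<Rightarrow> 'a set set" where
  "RO le = {E. rho le E = E}"

definition join :: "('a \<Rightarrow> 'a \<Rightarrow> bool) \<Rightarrow> 'a set \<Rightarrow> 'a set \<Rightarrow> 'a set" where
  "join le E F = rho le (E \<union> F)"

definition neg :: "('a \<Rightarrow> 'a \<Rightarrow> bool) \<Rightarrow> 'a set \<Rightarrow> 'a set" where
  "neg le E = {w. \<forall>w'. le w' w \<longrightarrow> w' \<notin> E}"

definition maxs :: "('a \<Rightarrow> 'a \<Rightarrow> bool) \<Rightarrow> 'a set \<Rightarrow> 'a set" where
  "maxs le E = {w\<in>E. \<not> (\<exists>v\<in>E. le w v \<and> \<not> le v w)}"

definition possibility_frame :: "('a \<Rightarrow> 'a \<Rightarrow> bool) \<Rightarrow> 'a set set \<Rightarrow> bool" where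
  "possibility_frame le Es \<longleftrightarrow> poset le \<and> Es \<noteq> {} \<and> Es \<subseteq> RO le
     \<and> (\<forall>E\<in>Es. \<forall>F\<in>Es. E \<inter> F \<in> Es) \<and> (\<forall>E\<in>Es. neg le E \<in> Es)"

definition quasi_principal :: "('a \<Rightarrow> 'a \<Rightarrow> bool) \<Rightarrow> 'a set set \<Rightarrow> bool" where
  "quasi_principal le Es \<longleftrightarrow> (\<forall>E\<in>Es. \<forall>w\<in>E. w \<in> down le (maxs le E))"

definition has_maximum :: "('a \<Rightarrow> 'a \<Rightarrow> bool) \<Rightarrow> bool" where
  "has_maximum le \<longleftrightarrow> (\<exists>m. \<forall>w. le w m)"

definition awareness_expressible ::
  "('a \<Rightarrow> 'a \<Rightarrow> bool) \<Rightarrow> 'a set set \<Rightarrow> ('a \<Rightarrow> 'a set) \<Rightarrow> bool" where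
  "awareness_expressible le Es A \<longleftrightarrow> (\<forall>w v. v \<in> A w \<longrightarrow> down le {v} \<in> Es)"

definition awareness_joinable ::
  "('a \<Rightarrow> 'a \<Rightarrow> bool) \<Rightarrow> 'a set set \<Rightarrow> ('a \<Rightarrow> 'a set) \<Rightarrow> bool" where
  "awareness_joinable le Es A \<longleftrightarrow>
     (\<forall>w v. \<forall>E\<in>Es. \<forall>E'\<in>Es. v \<in> A w \<longrightarrow>
        maxs le (E \<inter> down le {v}) \<union> maxs le (E' \<inter> down le {v}) \<subseteq> A w \<longrightarrow>
        maxs le (join le E E' \<inter> down le {v}) \<subseteq> A w)"

fun joins :: "('a \<Rightarrow> 'a \<Rightarrow> bool) \<Rightarrow> 'a list \<Rightarrow> 'a set" where
  "joins le [] = {}"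
| "joins le [x] = down le {x}"
| "joins le (x # y # xs) = join le (down le {x}) (joins le (y # xs))"

definition finite_join_condition ::
  "('a \<Rightarrow> 'a \<Rightarrow> bool) \<Rightarrow> ('a \<Rightarrow> 'a set) \<Rightarrow> bool" where
  "finite_join_condition le A \<longleftrightarrow>
     (\<forall>w v xs. v \<in> A w \<longrightarrow> xs \<noteq> [] \<longrightarrow> set xs \<subseteq> A w \<inter> down le {v} \<longrightarrow>
        maxs le (joins le xs \<inter> down le {v}) \<subseteq> A w)"

end

theory Submission imports Defs begin
lemma prefl: "poset le \<Longrightarrow> le x x" unfolding poset_def by blast
lemma ptrans: "poset le \<Longrightarrow> le x y \<Longrightarrow> le y z \<Longrightarrow> le x z" unfolding poset_def by blast
lemma pasym: "poset le \<Longrightarrow> le x y \<Longrightarrow> le y x \<Longrightarrow> x = y" unfolding poset_def by blast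
lemma rho_mono: "X \<subseteq> Y \<Longrightarrow> rho le X \<subseteq> rho le Y"
  unfolding rho_def down_def by blast
lemma sub_rho: "poset le \<Longrightarrow> X \<subseteq> rho le X"
  unfolding rho_def down_def using prefl by fastforce
lemma down_sub_rho: "poset le \<Longrightarrow> down le X \<subseteq> rho le X"
proof
  fix u assume p: "poset le" and "u \<in> down le X"
  then obtain x where x: "x \<in> X" "le u x" unfolding down_def by blast
  show "u \<in> rho le X" unfolding rho_def down_def
  proof (intro CollectI allI impI)
    fix u' assume "le u' u"
    then show "\<exists>w''. le w'' u' \<and> w'' \<in> {w. \<exists>v\<in>X. le w v}"
    proof (intro exI conjI)
      show "le u' u'" using p by (rule prefl)
      show "u' \<in> {w. \<exists>v\<in>X. le w v}" using x p ptrans[OF p \<open>le u' u\<close> x(2)] by blast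
    qed
  qed
qed
lemma rho_nn: "poset le \<Longrightarrow> (\<And>a b. le a b \<Longrightarrow> b \<in> X \<Longrightarrow> a \<in> X) \<Longrightarrow> rho le X = neg le (neg le X)"
proof -
  assume p: "poset le" and dc: "\<And>a b. le a b \<Longrightarrow> b \<in> X \<Longrightarrow> a \<in> X"
  have "(\<exists>w''. le w'' w' \<and> w'' \<in> down le X) \<longleftrightarrow> w' \<notin> neg le X" for w'
  proof
    assume "\<exists>w''. le w'' w' \<and> w'' \<in> down le X"
    then obtain a b where "le a w'" "le a b" "b \<in> X" unfolding down_def by blast
    then show "w' \<notin> neg le X" unfolding neg_def using dc by blast
  next
    assume "w' \<notin> neg le X"
    then obtain a where "le a w'" "a \<in> X" unfolding neg_def by blast
    then show "\<exists>w''. le w'' w' \<and> w'' \<in> down le X" unfolding down_def using prefl[OF p, of a] by blast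
  qed
  then show ?thesis unfolding rho_def neg_def[of le "neg le X"] by blast
qed
lemma rho_idem: "poset le \<Longrightarrow> rho le (rho le X) = rho le X"
proof
  assume p: "poset le"
  show "rho le X \<subseteq> rho le (rho le X)" using sub_rho[OF p] .
  show "rho le (rho le X) \<subseteq> rho le X"
  proof
    fix u assume u: "u \<in> rho le (rho le X)"
    show "u \<in> rho le X" unfolding rho_def
    proof (intro CollectI allI impI)
      fix u' assume "le u' u"
      then obtain a b where ab: "le a u'" "le a b" "b \<in> rho le X" using u unfolding rho_def down_def by blast
      then obtain c where "le c a" "c \<in> down le X" unfolding rho_def by blast
      then show "\<exists>w''. le w'' u' \<and> w'' \<in> down le X" using ptrans[OF p \<open>le c a\<close> ab(1)] by blast
    qed
  qed
qed
lemma rho_down: "poset le \<Longrightarrow> rho le (down le X) = rho le X"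
proof -
  assume p: "poset le"
  have "X \<subseteq> down le X" using prefl[OF p] unfolding down_def by blast
  hence "rho le X \<subseteq> rho le (down le X)" using rho_mono by blast
  moreover have "rho le (down le X) \<subseteq> rho le X"
    using rho_mono[OF down_sub_rho[OF p, of X]] rho_idem[OF p] by blast
  ultimately show ?thesis by blast
qed

lemma rho_un_rho: "poset le \<Longrightarrow> rho le (X \<union> rho le Y) = rho le (X \<union> Y)"
proof -
  assume p: "poset le"
  have a: "X \<union> Y \<subseteq> X \<union> rho le Y" using sub_rho[OF p, of Y] by blast
  have "rho le (X \<union> Y) \<subseteq> rho le (X \<union> rho le Y)"
    by (rule rho_mono[OF a])
  moreover have "X \<union> rho le Y \<subseteq> rho le (X \<union> Y)"
  proof -
    have "rho le Y \<subseteq> rho le (X \<union> Y)" by (rule rho_mono) blast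
    then show ?thesis using sub_rho[OF p, of "X \<union> Y"] by blast
  qed
  hence "rho le (X \<union> rho le Y) \<subseteq> rho le (X \<union> Y)"
    using rho_mono[of "X \<union> rho le Y" "rho le (X \<union> Y)" le] rho_idem[OF p, of "X \<union> Y"] by simp
  ultimately show ?thesis by blast
qed

lemma down_un: "down le (X \<union> Y) = down le X \<union> down le Y"
  unfolding down_def by blast

lemma down_down: "poset le \<Longrightarrow> down le (down le X) = down le X"
proof
  assume p: "poset le"
  show "down le (down le X) \<subseteq> down le X"
  proof
    fix u assume "u \<in> down le (down le X)"
    then obtain a b where "le u a" "le a b" "b \<in> X" unfolding down_def by blast
    then show "u \<in> down le X" using ptrans[OF p] unfolding down_def by blast
  qed
  show "down le X \<subseteq> down le (down le X)" using prefl[OF p] unfolding down_def by blast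
qed

lemma neg_un: "neg le (X \<union> Y) = neg le X \<inter> neg le Y"
  unfolding neg_def by blast

lemma RO_down_closed: "poset le \<Longrightarrow> E \<in> RO le \<Longrightarrow> le u x \<Longrightarrow> x \<in> E \<Longrightarrow> u \<in> E"
proof -
  assume p: "poset le" and E: "E \<in> RO le" and ux: "le u x" and x: "x \<in> E"
  have "x \<in> rho le E" using E x unfolding RO_def by simp
  have "u \<in> rho le E" unfolding rho_def
  proof (intro CollectI allI impI)
    fix u' assume "le u' u"
    then have "le u' x" using ptrans[OF p _ ux] by blast
    then show "\<exists>w''. le w'' u' \<and> w'' \<in> down le E"
      using \<open>x \<in> rho le E\<close> unfolding rho_def by blast
  qed
  then show ?thesis using E unfolding RO_def by simp
qed

lemma join_in: "possibility_frame le Es \<Longrightarrow> E \<in> Es \<Longrightarrow> F \<in> Es \<Longrightarrow> join le E F \<in> Es"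
proof -
  assume pf: "possibility_frame le Es" and E: "E \<in> Es" and F: "F \<in> Es"
  have p: "poset le" and RO: "Es \<subseteq> RO le" using pf unfolding possibility_frame_def by auto
  have "join le E F = neg le (neg le E \<inter> neg le F)"
    unfolding join_def neg_un[symmetric]
    by (rule rho_nn[OF p]) (use RO_down_closed[OF p] RO E F in blast)
  then show ?thesis using pf E F unfolding possibility_frame_def by simp
qed

lemma rho_empty: "poset le \<Longrightarrow> rho le {} = {}"
proof -
  assume p: "poset le"
  have "w \<notin> rho le {}" for w
    using prefl[OF p, of w] unfolding rho_def down_def by blast
  then show ?thesis by blast
qed

lemma maxs_down: "poset le \<Longrightarrow> maxs le (down le {x}) = {x}"
proof -
  assume p: "poset le"
  have "x \<in> maxs le (down le {x})" using prefl[OF p, of x] unfolding maxs_def down_def by blast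
  moreover have "u = x" if "u \<in> maxs le (down le {x})" for u
  proof -
    have "le u x" "\<not> (le u x \<and> \<not> le x u)" using that prefl[OF p, of x] unfolding maxs_def down_def by auto
    then show ?thesis using pasym[OF p] by blast
  qed
  ultimately show ?thesis by blast
qed

lemma down_sub: "poset le \<Longrightarrow> le x v \<Longrightarrow> down le {x} \<inter> down le {v} = down le {x}"
proof -
  assume p: "poset le" and xv: "le x v"
  have "le u v" if "le u x" for u using ptrans[OF p that xv] .
  then show ?thesis unfolding down_def by blast
qed

lemma joins_rho:
  assumes p: "poset le" and "xs \<noteq> []" and "\<forall>x\<in>set xs. down le {x} \<in> RO le"
  shows "joins le xs = rho le (set xs)"
  using assms(2,3)
proof (induction xs rule: induct_list012)
  case 1 then show ?case by simp
next
  case (2 x)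
  then show ?case using rho_down[OF p, of "{x}"] unfolding RO_def by simp
next
  case (3 x y xs)
  have "joins le (x # y # xs) = rho le (down le {x} \<union> rho le (set (y # xs)))"
    using 3 by (simp add: join_def)
  also have "\<dots> = rho le (down le {x} \<union> set (y # xs))" by (rule rho_un_rho[OF p])
  also have "\<dots> = rho le (down le (down le {x} \<union> set (y # xs)))" by (rule rho_down[OF p, symmetric])
  also have "\<dots> = rho le (down le ({x} \<union> set (y # xs)))" unfolding down_un down_down[OF p] ..
  also have "\<dots> = rho le (set (x # y # xs))" using rho_down[OF p] by (simp add: insert_commute)
  finally show ?case using 3 by simp
qed

theorem lemma3p2:
  fixes le :: "'a \<Rightarrow> 'a \<Rightarrow> bool" and Es :: "'a set set" and A :: "'a \<Rightarrow> 'a set"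
  assumes "possibility_frame le Es"
    and "quasi_principal le Es"
    and "has_maximum le"
    and "awareness_expressible le Es A"
  shows "(awareness_joinable le Es A \<longrightarrow> finite_join_condition le A)
    \<and> ((\<forall>E\<in>Es. finite (maxs le E)) \<longrightarrow> finite_join_condition le A \<longrightarrow> awareness_joinable le Es A)"
proof -
  have p: "poset le" and RO: "Es \<subseteq> RO le" and int: "\<forall>E\<in>Es. \<forall>F\<in>Es. E \<inter> F \<in> Es"
    using assms(1) unfolding possibility_frame_def by auto
  have ex: "\<And>w v. v \<in> A w \<Longrightarrow> down le {v} \<in> Es"
    using assms(4) unfolding awareness_expressible_def by blast
  have qp: "\<And>E w. E \<in> Es \<Longrightarrow> w \<in> E \<Longrightarrow> w \<in> down le (maxs le E)"
    using assms(2) unfolding quasi_principal_def by blast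
  show ?thesis
  proof (intro conjI impI)
    assume J: "awareness_joinable le Es A"
    show "finite_join_condition le A"
      unfolding finite_join_condition_def
    proof (intro allI impI)
      fix w v xs
      assume v: "v \<in> A w"
      have "xs \<noteq> [] \<Longrightarrow> set xs \<subseteq> A w \<inter> down le {v} \<Longrightarrow>
          joins le xs \<in> Es \<and> maxs le (joins le xs \<inter> down le {v}) \<subseteq> A w"
      proof (induction xs rule: induct_list012)
        case 1 then show ?case by simp
      next
        case (2 x)
        have "down le {x} \<inter> down le {v} = down le {x}"
          using 2 down_sub[OF p] unfolding down_def by auto
        then show ?case using 2 ex maxs_down[OF p] by auto
      next
        case (3 x y xs)
        have IH: "joins le (y # xs) \<in> Es \<and> maxs le (joins le (y # xs) \<inter> down le {v}) \<subseteq> A w"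
          using 3 by auto
        have dx: "down le {x} \<in> Es" using 3 ex by auto
        have "down le {x} \<inter> down le {v} = down le {x}"
          using 3 down_sub[OF p] unfolding down_def by auto
        hence "maxs le (down le {x} \<inter> down le {v}) \<subseteq> A w" using 3 maxs_down[OF p] by auto
        hence "maxs le (join le (down le {x}) (joins le (y # xs)) \<inter> down le {v}) \<subseteq> A w"
          using J v dx IH unfolding awareness_joinable_def by blast
        then show ?case using join_in[OF assms(1) dx] IH by simp
      qed
      then show "xs \<noteq> [] \<Longrightarrow> set xs \<subseteq> A w \<inter> down le {v} \<Longrightarrow>
          maxs le (joins le xs \<inter> down le {v}) \<subseteq> A w" by blast
    qed
  next
    assume fin: "\<forall>E\<in>Es. finite (maxs le E)" and FJ: "finite_join_condition le A"
    show "awareness_joinable le Es A"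
      unfolding awareness_joinable_def
    proof (intro allI ballI impI)
      fix w v E E'
      assume E: "E \<in> Es" and E': "E' \<in> Es" and v: "v \<in> A w"
        and M: "maxs le (E \<inter> down le {v}) \<union> maxs le (E' \<inter> down le {v}) \<subseteq> A w"
      define M where "M = maxs le (E \<inter> down le {v}) \<union> maxs le (E' \<inter> down le {v})"
      have dv: "down le {v} \<in> Es" using ex v by blast
      have Ev: "E \<inter> down le {v} \<in> Es" "E' \<inter> down le {v} \<in> Es" using int E E' dv by auto
      have finM: "finite M" unfolding M_def using fin Ev by auto
      have dcl: "\<And>F u x. F \<in> Es \<Longrightarrow> le u x \<Longrightarrow> x \<in> F \<Longrightarrow> u \<in> F"
        using RO_down_closed[OF p] RO by blast
      have dmax: "\<And>F. F \<in> Es \<Longrightarrow> down le (maxs le F) = down le F"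
      proof -
        fix F assume F: "F \<in> Es"
        show "down le (maxs le F) = down le F"
        proof
          show "down le (maxs le F) \<subseteq> down le F" unfolding down_def maxs_def by blast
          show "down le F \<subseteq> down le (maxs le F)"
          proof
            fix u assume "u \<in> down le F"
            then obtain x where x: "x \<in> F" "le u x" unfolding down_def by blast
            then obtain m where "m \<in> maxs le F" "le x m" using qp[OF F x(1)] unfolding down_def by blast
            then show "u \<in> down le (maxs le F)" using x ptrans[OF p x(2)] unfolding down_def by blast
          qed
        qed
      qed
      have dM: "down le M = down le ((E \<union> E') \<inter> down le {v})"
        unfolding M_def down_un using dmax Ev by (simp add: Int_Un_distrib2 down_un)
      have key: "join le E E' \<inter> down le {v} = rho le M \<inter> down le {v}"
      proof -
        have "rho le M = rho le ((E \<union> E') \<inter> down le {v})"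
          using rho_down[OF p, of M] rho_down[OF p, of "(E \<union> E') \<inter> down le {v}"] dM by simp
        moreover have "rho le (E \<union> E') \<inter> down le {v} = rho le ((E \<union> E') \<inter> down le {v}) \<inter> down le {v}"
        proof
          show "rho le ((E \<union> E') \<inter> down le {v}) \<inter> down le {v} \<subseteq> rho le (E \<union> E') \<inter> down le {v}"
            using rho_mono[of "(E \<union> E') \<inter> down le {v}" "E \<union> E'" le] by blast
          show "rho le (E \<union> E') \<inter> down le {v} \<subseteq> rho le ((E \<union> E') \<inter> down le {v}) \<inter> down le {v}"
          proof
            fix u assume u: "u \<in> rho le (E \<union> E') \<inter> down le {v}"
            have "\<forall>u'. le u' u \<longrightarrow> (\<exists>u''. le u'' u' \<and> u'' \<in> down le ((E \<union> E') \<inter> down le {v}))"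
            proof (intro allI impI)
              fix u' assume u': "le u' u"
              obtain u'' z where z: "le u'' u'" "le u'' z" "z \<in> E \<union> E'"
                using u u' unfolding rho_def down_def by blast
              have "u'' \<in> E \<union> E'" using z dcl E E' by blast
              moreover have "le u v" using u unfolding down_def by blast
              have "le u'' v" using ptrans[OF p z(1) ptrans[OF p u' \<open>le u v\<close>]] .
              ultimately show "\<exists>u''. le u'' u' \<and> u'' \<in> down le ((E \<union> E') \<inter> down le {v})"
                using z(1) prefl[OF p, of u''] unfolding down_def by blast
            qed
            then show "u \<in> rho le ((E \<union> E') \<inter> down le {v}) \<inter> down le {v}"
              using u unfolding rho_def by blast
          qed
        qed
        ultimately show ?thesis unfolding join_def by simp
      qed
      show "maxs le (join le E E' \<inter> down le {v}) \<subseteq> A w"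
      proof (cases "M = {}")
        case True
        then show ?thesis using key rho_empty[OF p] by (simp add: maxs_def)
      next
        case False
        obtain xs where xs: "set xs = M" using finite_list[OF finM] by blast
        have ne: "xs \<noteq> []" using xs False by auto
        have MA: "M \<subseteq> A w" using M M_def by simp
        have Mv: "M \<subseteq> down le {v}" unfolding M_def maxs_def by blast
        have "joins le xs = rho le M"
          using joins_rho[OF p ne] xs MA ex RO by blast
        moreover have "maxs le (joins le xs \<inter> down le {v}) \<subseteq> A w"
          using FJ v ne xs MA Mv unfolding finite_join_condition_def by blast
        ultimately show ?thesis using key by simp
      qed
    qed
  qed
qed

end
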